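(* Let $m,n$ be positive integers and $(A,\boldsymbol{\gamma})\in[0,1)^{m\times n}\times[0,1)^m$. If $\langle A\boldsymbol{q}-\boldsymbol{\gamma}\rangle>0$ for every $\boldsymbol{q}\in\mathbb{Z}^n\setminus\{\boldsymbol{0}\}$, then $(A,\boldsymbol{\gamma})\in\Omega(m,n)$ if and only if $S_1(A,\boldsymbol{\gamma})<+\infty$.
   Context: $[0,1)^{m\times n}$ is the set of real $m\times n$ matrices with entries in $[0,1)$. For $\boldsymbol{x}\in\mathbb{R}^n$, $\|\boldsymbol{x}\|=\max_i|x_i|$; for $\boldsymbol{y}\in\mathbb{R}^m$, $\langle\boldsymbol{y}\rangle=\min_{\boldsymbol{p}\in\mathbb{Z}^m}\|\boldsymbol{y}-\boldsymbol{p}\|$. For $\psi:\mathbb{N}\to[0,\infty)$, $W_{m,n}(\psi)$ is the set of pairs $(A,\boldsymbol{\gamma})$ such that $\langle A\boldsymbol{q}-\boldsymbol{\gamma}\rangle<\psi(\|\boldsymbol{q}\|)$ for infinitely many $\boldsymbol{q}\in\mathbb{Z}^n$. "Decreasing" means non-increasing. $\mathcal{D}$ is the set of decreasing $\psi:\mathbb{N}\to[0,\infty)$ with $\sum_{q\ge1}q^{n-1}\psi(q)^m=\infty$; $\Omega(m,n)=\bigcap_{\psi\in\mathcal{D}}W_{m,n}(\psi)$. $S_1(A,\boldsymbol{\gamma})=\sum_{t=1}^\infty t^{n-1}\min_{\boldsymbol{q}\in\mathbb{Z}^n,\ 1\le\|\boldsymbol{q}\|\le t}\langle A\boldsymbol{q}-\boldsymbol{\gamma}\rangle^m$.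 *)

theory Defs
  imports "HOL-Analysis.Analysis"
begin

definition znorm :: "int ^ 'n \<Rightarrow> nat" where
  "znorm q = Max (range (\<lambda>i. nat \<bar>q $ i\<bar>))"

definition rnorm :: "real ^ 'm \<Rightarrow> real" where
  "rnorm y = Max (range (\<lambda>i. \<bar>y $ i\<bar>))"

definition dZ :: "real ^ 'm \<Rightarrow> real" where
  "dZ y = Inf {rnorm (y - (\<chi> i. of_int (p $ i))) | p :: int ^ 'm. True}"

definition intvec :: "int ^ 'n \<Rightarrow> real ^ 'n" where
  "intvec q = (\<chi> i. of_int (q $ i))"

definition W :: "(nat \<Rightarrow> real) \<Rightarrow> ((real ^ 'n ^ 'm) \<times> (real ^ 'm)) set" where
  "W \<psi> = {(A, \<gamma>). infinite {q :: int ^ 'n. dZ (A *v intvec q - \<gamma>) < \<psi> (znorm q)}}"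

definition Dcls :: "nat \<Rightarrow> nat \<Rightarrow> (nat \<Rightarrow> real) set" where
  "Dcls m n = {\<psi>. (\<forall>q\<ge>1. 0 \<le> \<psi> q) \<and> (\<forall>a b. 1 \<le> a \<longrightarrow> a \<le> b \<longrightarrow> \<psi> b \<le> \<psi> a)
      \<and> \<not> summable (\<lambda>q. real (Suc q) ^ (n - 1) * \<psi> (Suc q) ^ m)}"

definition Omega :: "((real ^ 'n ^ 'm) \<times> (real ^ 'm)) set" where
  "Omega = (\<Inter>\<psi>\<in>Dcls CARD('m) CARD('n). W \<psi>)"

definition S1_term :: "real ^ 'n ^ 'm \<Rightarrow> real ^ 'm \<Rightarrow> nat \<Rightarrow> real" where
  "S1_term A \<gamma> t = real t ^ (CARD('n) - 1) *
     (Min ((\<lambda>q :: int ^ 'n. dZ (A *v intvec q - \<gamma>)) ` {q. 1 \<le> znorm q \<and> znorm q \<le> t})) ^ CARD('m)"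

text \<open>S_1(A, gamma) < +infinity (sum over t >= 1 of nonnegative terms).\<close>
definition S1_finite :: "real ^ 'n ^ 'm \<Rightarrow> real ^ 'm \<Rightarrow> bool" where
  "S1_finite A \<gamma> \<longleftrightarrow> summable (\<lambda>t. S1_term A \<gamma> (Suc t))"

end

theory Submission
  imports Defs
begin

definition phi :: "real ^ 'n ^ 'm \<Rightarrow> real ^ 'm \<Rightarrow> nat \<Rightarrow> real" where
  "phi A \<gamma> t = Min ((\<lambda>q :: int ^ 'n. dZ (A *v intvec q - \<gamma>)) ` {q. 1 \<le> znorm q \<and> znorm q \<le> t})"

lemma znorm_le: "znorm (q :: int ^ 'n) \<le> t \<longleftrightarrow> (\<forall>i. nat \<bar>q $ i\<bar> \<le> t)"
  unfolding znorm_def by (subst Max_le_iff) auto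

lemma znorm_pos: "1 \<le> znorm (q :: int ^ 'n) \<longleftrightarrow> q \<noteq> 0"
proof -
  have "1 \<le> znorm q \<longleftrightarrow> (\<exists>i. 1 \<le> nat \<bar>q $ i\<bar>)"
    unfolding znorm_def by (subst Max_ge_iff) auto
  also have "\<dots> \<longleftrightarrow> (\<exists>i. q $ i \<noteq> 0)"
    by (auto simp: Suc_le_eq)
  also have "\<dots> \<longleftrightarrow> q \<noteq> 0" by (auto simp: vec_eq_iff)
  finally show ?thesis .
qed

lemma finite_znorm: "finite {q :: int ^ 'n. znorm q \<le> t}"
proof -
  have "{q :: int ^ 'n. znorm q \<le> t} \<subseteq> vec_lambda ` (PiE UNIV (\<lambda>_. {- int t..int t}))"
  proof
    fix q :: "int ^ 'n" assume "q \<in> {q. znorm q \<le> t}"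
    then have "\<forall>i. nat \<bar>q $ i\<bar> \<le> t" by (simp add: znorm_le)
    then have "\<forall>i. \<bar>q $ i\<bar> \<le> int t" by (simp add: nat_le_iff)
    then have "\<forall>i. - int t \<le> q $ i \<and> q $ i \<le> int t"
      by (simp add: abs_le_iff minus_le_iff)
    then have mem: "vec_nth q \<in> PiE UNIV (\<lambda>_. {- int t..int t})" by (simp add: PiE_def extensional_def)
    have eq: "q = vec_lambda (vec_nth q)" by simp
    from eq mem show "q \<in> vec_lambda ` (PiE UNIV (\<lambda>_. {- int t..int t}))"
      by (rule image_eqI)
  qed
  moreover have "finite (vec_lambda ` (PiE UNIV (\<lambda>_. {- int t..int t})) :: (int ^ 'n) set)"
    by (intro finite_imageI finite_PiE) auto
  ultimately show ?thesis by (rule finite_subset)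
qed

lemma finite_box: "finite {q :: int ^ 'n. 1 \<le> znorm q \<and> znorm q \<le> t}"
  by (rule finite_subset[OF _ finite_znorm[of t]]) auto

lemma rnorm_nonneg: "0 \<le> rnorm y"
proof -
  have "\<bar>y $ undefined\<bar> \<le> rnorm y" unfolding rnorm_def by (rule Max_ge) auto
  then show ?thesis by linarith
qed

lemma dZ_nonneg: "0 \<le> dZ y"
  unfolding dZ_def by (rule cInf_greatest) (auto simp: rnorm_nonneg)

lemma phi_le:
  assumes "q \<noteq> 0" "znorm q \<le> t"
  shows "phi A \<gamma> t \<le> dZ (A *v intvec q - \<gamma>)"
proof -
  have "q \<in> {q. 1 \<le> znorm q \<and> znorm q \<le> t}" using assms znorm_pos[of q] by blast
  then show ?thesis unfolding phi_def by (intro Min_le finite_imageI finite_box imageI)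
qed

lemma phi_in:
  assumes "1 \<le> t"
  shows "\<exists>q. q \<noteq> 0 \<and> znorm q \<le> t \<and> phi A \<gamma> t = dZ (A *v intvec (q :: int ^ 'n) - \<gamma>)"
proof -
  obtain i :: 'n where True by auto
  let ?q = "(\<chi> j. if j = i then 1 else 0) :: int ^ 'n"
  have "?q \<noteq> 0" by (auto simp: vec_eq_iff intro!: exI[of _ i])
  moreover have "znorm ?q \<le> t" using assms by (auto simp: znorm_le)
  ultimately have ne: "{q :: int ^ 'n. 1 \<le> znorm q \<and> znorm q \<le> t} \<noteq> {}"
    using znorm_pos by blast
  have "phi A \<gamma> t \<in> (\<lambda>q :: int ^ 'n. dZ (A *v intvec q - \<gamma>)) ` {q. 1 \<le> znorm q \<and> znorm q \<le> t}"
    unfolding phi_def using ne finite_box[of t] by (intro Min_in) auto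
  then obtain q :: "int ^ 'n" where "1 \<le> znorm q" "znorm q \<le> t" "phi A \<gamma> t = dZ (A *v intvec q - \<gamma>)"
    by blast
  then show ?thesis using znorm_pos[of q] by blast
qed

lemma phi_nonneg: "1 \<le> t \<Longrightarrow> 0 \<le> phi A \<gamma> t"
  using phi_in[of t A \<gamma>] dZ_nonneg by metis

lemma phi_mono:
  fixes A :: "real ^ 'n ^ 'm"
  assumes "1 \<le> a" "a \<le> b"
  shows "phi A \<gamma> b \<le> phi A \<gamma> a"
proof -
  obtain q :: "int ^ 'n" where q: "q \<noteq> 0" "znorm q \<le> a" "phi A \<gamma> a = dZ (A *v intvec q - \<gamma>)"
    using phi_in[OF assms(1)] by blast
  show ?thesis using phi_le[of q b A \<gamma>] q assms by simp
qed

lemma S1_term_phi: "S1_term A \<gamma> t = real t ^ (CARD('n) - 1) * phi A \<gamma> t ^ CARD('m)"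
  for A :: "real ^ 'n ^ 'm"
  unfolding S1_term_def phi_def by simp

theorem corollary2p1:
  fixes A :: "real ^ 'n ^ 'm" and \<gamma> :: "real ^ 'm"
  assumes "\<forall>i j. 0 \<le> A $ i $ j \<and> A $ i $ j < 1"
    and "\<forall>i. 0 \<le> \<gamma> $ i \<and> \<gamma> $ i < 1"
    and "\<forall>q :: int ^ 'n. q \<noteq> 0 \<longrightarrow> dZ (A *v intvec q - \<gamma>) > 0"
  shows "(A, \<gamma>) \<in> Omega \<longleftrightarrow> S1_finite A \<gamma>"
proof
  assume om: "(A, \<gamma>) \<in> Omega"
  show "S1_finite A \<gamma>"
  proof (rule ccontr)
    assume ns: "\<not> S1_finite A \<gamma>"
    let ?psi = "phi A \<gamma>"
    have "?psi \<in> Dcls CARD('m) CARD('n)"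
      unfolding Dcls_def using ns
      by (auto simp: phi_nonneg phi_mono S1_finite_def S1_term_phi)
    then have "(A, \<gamma>) \<in> W ?psi" using om unfolding Omega_def by blast
    moreover have "{q :: int ^ 'n. dZ (A *v intvec q - \<gamma>) < ?psi (znorm q)} \<subseteq> {0}"
      using phi_le[of _ "znorm _" A \<gamma>] by force
    ultimately show False unfolding W_def by (auto dest: finite_subset)
  qed
next
  assume fin: "S1_finite A \<gamma>"
  show "(A, \<gamma>) \<in> Omega"
    unfolding Omega_def
  proof
    fix \<psi> assume "\<psi> \<in> Dcls CARD('m) CARD('n)"
    then have psi0: "\<And>q. q \<ge> 1 \<Longrightarrow> 0 \<le> \<psi> q"
      and psim: "\<And>a b. 1 \<le> a \<Longrightarrow> a \<le> b \<Longrightarrow> \<psi> b \<le> \<psi> a"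
      and psis: "\<not> summable (\<lambda>q. real (Suc q) ^ (CARD('n) - 1) * \<psi> (Suc q) ^ CARD('m))"
      unfolding Dcls_def by auto
    let ?F = "{q :: int ^ 'n. dZ (A *v intvec q - \<gamma>) < \<psi> (znorm q)}"
    show "(A, \<gamma>) \<in> W \<psi>"
      unfolding W_def
    proof (simp, rule notI)
      assume Ffin: "finite ?F"
      let ?f = "\<lambda>t. phi A \<gamma> (Suc t) ^ CARD('m)"
      have sm: "summable (\<lambda>t. S1_term A \<gamma> (Suc t))" using fin unfolding S1_finite_def .
      have "(\<lambda>t. S1_term A \<gamma> (Suc t)) \<longlonglongrightarrow> 0" using summable_LIMSEQ_zero[OF sm] .
      moreover have "\<And>t. 0 \<le> ?f t"
      proof -
        fix t show "0 \<le> ?f t" using phi_nonneg[of "Suc t" A \<gamma>] by simp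
      qed
      moreover have "\<And>t. ?f t \<le> S1_term A \<gamma> (Suc t)"
      proof -
        fix t
        have "1 \<le> real (Suc t) ^ (CARD('n) - 1)" by simp
        moreover have "0 \<le> ?f t" using phi_nonneg[of "Suc t" A \<gamma>] by simp
        ultimately show "?f t \<le> S1_term A \<gamma> (Suc t)"
          unfolding S1_term_phi by (metis mult_le_cancel_right1 mult.commute not_le order_less_le_trans zero_le_mult_iff)
      qed
      ultimately have flim: "?f \<longlonglongrightarrow> 0"
        by (intro tendsto_sandwich[of "\<lambda>_. 0" ?f sequentially "\<lambda>t. S1_term A \<gamma> (Suc t)"] always_eventually allI tendsto_const) auto
      have ev: "\<forall>\<^sub>F t in sequentially. \<forall>q\<in>?F - {0}. ?f t < dZ (A *v intvec q - \<gamma>) ^ CARD('m)"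
      proof (rule eventually_ball_finite)
        show "finite (?F - {0})" using Ffin by auto
        show "\<forall>q\<in>?F - {0}. \<forall>\<^sub>F t in sequentially. ?f t < dZ (A *v intvec q - \<gamma>) ^ CARD('m)"
          using assms(3) by (auto intro!: order_tendstoD(2)[OF flim])
      qed
      have "\<forall>\<^sub>F t in sequentially. real (Suc t) ^ (CARD('n) - 1) * \<psi> (Suc t) ^ CARD('m)
              \<le> S1_term A \<gamma> (Suc t)"
        using ev
      proof eventually_elim
        case (elim t)
        have "\<psi> (Suc t) \<le> phi A \<gamma> (Suc t)"
        proof (rule ccontr)
          assume "\<not> ?thesis"
          then have lt: "phi A \<gamma> (Suc t) < \<psi> (Suc t)" by simp
          obtain q :: "int ^ 'n" where q: "q \<noteq> 0" "znorm q \<le> Suc t"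
            "phi A \<gamma> (Suc t) = dZ (A *v intvec q - \<gamma>)"
            using phi_in[of "Suc t" A \<gamma>] by auto
          have "\<psi> (Suc t) \<le> \<psi> (znorm q)" using psim q znorm_pos by blast
          then have "q \<in> ?F - {0}" using q lt by auto
          then have "?f t < dZ (A *v intvec q - \<gamma>) ^ CARD('m)" using elim by blast
          then show False using q by simp
        qed
        then have "\<psi> (Suc t) ^ CARD('m) \<le> phi A \<gamma> (Suc t) ^ CARD('m)"
          using psi0[of "Suc t"] by (intro power_mono) auto
        then show ?case unfolding S1_term_phi by (intro mult_left_mono) auto
      qed
      then have "\<forall>\<^sub>F t in sequentially. norm (real (Suc t) ^ (CARD('n) - 1) * \<psi> (Suc t) ^ CARD('m))
              \<le> S1_term A \<gamma> (Suc t)"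
      proof (rule eventually_mono)
        fix t
        assume h: "real (Suc t) ^ (CARD('n) - 1) * \<psi> (Suc t) ^ CARD('m) \<le> S1_term A \<gamma> (Suc t)"
        have "0 \<le> \<psi> (Suc t)" using psi0 by simp
        then have "0 \<le> real (Suc t) ^ (CARD('n) - 1) * \<psi> (Suc t) ^ CARD('m)" by simp
        then show "norm (real (Suc t) ^ (CARD('n) - 1) * \<psi> (Suc t) ^ CARD('m)) \<le> S1_term A \<gamma> (Suc t)"
          using h by simp
      qed
      then have "summable (\<lambda>t. real (Suc t) ^ (CARD('n) - 1) * \<psi> (Suc t) ^ CARD('m))"
        by (rule summable_comparison_test_ev) (rule sm)
      then show False using psis by contradiction
    qed
  qed
qed

end
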